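(* Let $F$ be a positive integer, $l$ a non-negative integer, and $S$ a numerical semigroup with $\mathrm{F}(S)=F$. The following are equivalent: (1) $\mathrm{l}(S)=l$ and $l\ge 2$; (2) there exist a numerical semigroup $T$ with $\mathrm{F}(T)=F$ and $x\in\mathrm{msg}(T)$ such that $\mathrm{l}(T)=l-2$, $\frac{F}{2}<x<F$, and $S=T\setminus\{x\}$.
   Context: A numerical semigroup is a subset $S\subseteq\mathbb{N}$ closed under addition with $0\in S$ and $\mathbb{N}\setminus S$ finite; $\mathrm{F}(S)=\max(\mathbb{Z}\setminus S)$. $\mathrm{msg}(T)$ is the minimal system of generators of $T$. $\mathrm{N}(S)=\{s\in S\mid s<\mathrm{F}(S)\}$, $\mathrm{L}(S)=\{x\in\mathbb{N}\setminus S\mid \mathrm{F}(S)-x\notin \mathrm{N}(S)\}$, $\mathrm{l}(S)=\#\mathrm{L}(S)$. *)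

theory Defs
  imports Main
begin

definition numerical_semigroup :: "nat set \<Rightarrow> bool" where
  "numerical_semigroup S \<longleftrightarrow> 0 \<in> S \<and> (\<forall>a\<in>S. \<forall>b\<in>S. a + b \<in> S) \<and> finite (UNIV - S)"

definition frobenius :: "nat set \<Rightarrow> int" where
  "frobenius S = (if UNIV - S = {} then -1 else int (Max (UNIV - S)))"

definition msg :: "nat set \<Rightarrow> nat set" where
  "msg S = {x \<in> S. x \<noteq> 0 \<and> \<not> (\<exists>a\<in>S. \<exists>b\<in>S. a \<noteq> 0 \<and> b \<noteq> 0 \<and> x = a + b)}"

definition Nset :: "nat set \<Rightarrow> nat set" where
  "Nset S = {s \<in> S. int s < frobenius S}"

definition Lset :: "nat set \<Rightarrow> nat set" where
  "Lset S = {x. x \<notin> S \<and> \<not> (frobenius S - int x \<ge> 0 \<and> nat (frobenius S - int x) \<in> Nset S)}"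

definition lnum :: "nat set \<Rightarrow> nat" where
  "lnum S = card (Lset S)"

end

theory Submission
  imports Defs
begin

lemma frob_char:
  assumes "numerical_semigroup S" "frobenius S = int n"
  shows "n \<notin> S \<and> (\<forall>m>n. m \<in> S)"
proof -
  have ne: "UNIV - S \<noteq> {}" using assms(2) unfolding frobenius_def by (auto split: if_splits)
  have fin: "finite (UNIV - S)" using assms(1) unfolding numerical_semigroup_def by auto
  have n: "n = Max (UNIV - S)" using assms(2) ne unfolding frobenius_def by auto
  have "n \<in> UNIV - S" using n Max_in[OF fin ne] by simp
  moreover have "\<forall>m>n. m \<in> S" using n Max_ge[OF fin] by (metis Diff_iff UNIV_I not_le)
  ultimately show ?thesis by auto
qed

lemma frob_intro:
  assumes "n \<notin> S" "\<forall>m>n. m \<in> S"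
  shows "frobenius S = int n"
proof -
  have sub: "UNIV - S \<subseteq> {..n}" using assms(2) by (auto simp: not_less[symmetric])
  hence fin: "finite (UNIV - S)" using finite_subset by blast
  have "Max (UNIV - S) = n"
    by (rule Max_eqI[OF fin]) (use sub assms(1) in auto)
  thus ?thesis using assms(1) unfolding frobenius_def by auto
qed

lemma L_char:
  assumes "numerical_semigroup S" "frobenius S = int n" "n > 0"
  shows "Lset S = {y. y \<notin> S \<and> y \<le> n \<and> n - y \<notin> S}"
proof -
  have fc: "n \<notin> S" "\<forall>m>n. m \<in> S" using frob_char[OF assms(1,2)] by auto
  have z: "0 \<in> S" using assms(1) unfolding numerical_semigroup_def by auto
  show ?thesis
  proof (rule set_eqI, rule iffI)
    fix y assume "y \<in> Lset S"
    hence y: "y \<notin> S" "\<not> (int n - int y \<ge> 0 \<and> nat (int n - int y) \<in> Nset S)"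
      unfolding Lset_def assms(2) by auto
    have "y \<le> n" using y(1) fc(2) by (meson not_le)
    moreover have "0 < y" using y(1) z by (cases y) auto
    moreover have "nat (int n - int y) = n - y" by simp
    ultimately show "y \<in> {y. y \<notin> S \<and> y \<le> n \<and> n - y \<notin> S}"
      using y unfolding Nset_def assms(2) by (auto simp: of_nat_diff nat_minus_as_int[symmetric])
  next
    fix y assume y: "y \<in> {y. y \<notin> S \<and> y \<le> n \<and> n - y \<notin> S}"
    have "nat (int n - int y) = n - y" by simp
    thus "y \<in> Lset S" using y unfolding Lset_def Nset_def assms(2) by auto
  qed
qed

lemma L_remove:
  assumes T: "numerical_semigroup T" "frobenius T = int n"
    and S: "numerical_semigroup S" "frobenius S = int n" "S = T - {x}"
    and x: "x \<in> T" "0 < x" "x < n" "n < 2 * x"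
  shows "lnum S = lnum T + 2"
proof -
  have n0: "n > 0" using x by auto
  have ft: "n \<notin> T" using frob_char[OF T] by auto
  have cl: "\<forall>a\<in>T. \<forall>b\<in>T. a + b \<in> T" using T(1) unfolding numerical_semigroup_def by auto
  have nx: "n - x \<notin> T"
  proof
    assume "n - x \<in> T" hence "(n - x) + x \<in> T" using cl x(1) by blast
    thus False using ft x by auto
  qed
  have LS0: "Lset S = {y. y \<notin> S \<and> y \<le> n \<and> n - y \<notin> S}" by (rule L_char[OF S(1,2) n0])
  have "{y. y \<notin> S \<and> y \<le> n \<and> n - y \<notin> S} = Lset T \<union> {x, n - x}"
    unfolding L_char[OF T n0] S(3) using x nx by auto
  hence LS: "Lset S = Lset T \<union> {x, n - x}" using LS0 by simp
  have fin: "finite (Lset T)" unfolding L_char[OF T n0] by (rule finite_subset[of _ "{..n}"]) auto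
  have "x \<notin> Lset T" "n - x \<notin> Lset T" unfolding L_char[OF T n0] using x nx by auto
  moreover have "x \<noteq> n - x" using x by auto
  ultimately show ?thesis unfolding lnum_def LS using fin by (simp add: card_insert_if)
qed

theorem proposition10:
  fixes F :: int and l :: nat and S :: "nat set"
  assumes "F > 0"
    and "numerical_semigroup S"
    and "frobenius S = F"
  shows "(lnum S = l \<and> l \<ge> 2) \<longleftrightarrow>
    (\<exists>T x. numerical_semigroup T \<and> frobenius T = F \<and> x \<in> msg T \<and>
       int (lnum T) = int l - 2 \<and> F < 2 * int x \<and> int x < F \<and> S = T - {x})"
proof -
  define n where "n = nat F"
  have Fn: "F = int n" using assms(1) n_def by auto
  have n0: "n > 0" using assms(1) n_def by auto
  have Sf: "frobenius S = int n" using assms(3) Fn by simp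
  have fc: "n \<notin> S" "\<forall>m>n. m \<in> S" using frob_char[OF assms(2) Sf] by auto
  have z: "0 \<in> S" and clS: "\<forall>a\<in>S. \<forall>b\<in>S. a + b \<in> S"
    using assms(2) unfolding numerical_semigroup_def by auto
  have LC: "Lset S = {y. y \<notin> S \<and> y \<le> n \<and> n - y \<notin> S}" using L_char[OF assms(2) Sf n0] .
  show ?thesis
  proof
    assume A: "lnum S = l \<and> l \<ge> 2"
    have fin: "finite (Lset S)" unfolding LC by (rule finite_subset[of _ "{..n}"]) auto
    have ne: "Lset S \<noteq> {}" using A unfolding lnum_def by auto
    define x where "x = Max (Lset S)"
    have xL: "x \<in> Lset S" using Max_in[OF fin ne] x_def by simp
    have xmax: "\<And>y. y \<in> Lset S \<Longrightarrow> y \<le> x" using Max_ge[OF fin] x_def by simp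
    have xS: "x \<notin> S" "x \<le> n" "n - x \<notin> S" using xL LC by auto
    have x0: "x > 0" using xS z by (cases x) auto
    have xn: "x < n" using xS z by (cases "x = n") auto
    have x2: "n < 2 * x"
    proof (rule ccontr)
      assume "\<not> n < 2 * x"
      hence all: "\<forall>y\<in>Lset S. y = x"
      proof (intro ballI)
        fix y assume y: "y \<in> Lset S" "\<not> n < 2 * x"
        have "n - y \<in> Lset S" using y LC by auto
        hence "n - y \<le> x" using xmax by blast
        moreover have "y \<le> x" using xmax y by blast
        moreover have "y \<le> n" using y LC by auto
        ultimately show "y = x" using y(2) by linarith
      qed
      hence "Lset S \<subseteq> {x}" by auto
      hence "card (Lset S) \<le> 1" using card_mono[of "{x}"] by fastforce
      thus False using A unfolding lnum_def by auto
    qed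
    define T where "T = insert x S"
    have clT: "\<forall>a\<in>T. \<forall>b\<in>T. a + b \<in> T"
    proof (intro ballI)
      have key: "x + b \<in> T" if b: "b \<in> S" for b
      proof (cases "b = 0")
        case True thus ?thesis using T_def by simp
      next
        case False
        show ?thesis
        proof (rule ccontr)
          assume nin: "x + b \<notin> T"
          hence nS: "x + b \<notin> S" using T_def by auto
          have le: "x + b \<le> n" using nS fc(2) by (meson not_le)
          have ne': "x + b \<noteq> n" using b xS by auto
          have "n - (x + b) \<notin> S"
          proof
            assume "n - (x + b) \<in> S"
            hence "n - (x + b) + b \<in> S" using clS b by blast
            moreover have "n - (x + b) + b = n - x" using le by simp
            ultimately show False using xS by simp
          qed
          hence "x + b \<in> Lset S" using LC nS le by auto
          thus False using xmax False by fastforce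
        qed
      qed
      fix a b assume ab: "a \<in> T" "b \<in> T"
      show "a + b \<in> T"
      proof (cases "a = x")
        case True
        show ?thesis
        proof (cases "b = x")
          case True
          have "x + x \<in> S" using fc(2) x2 by auto
          thus ?thesis using `a = x` True T_def by simp
        next
          case False thus ?thesis using key ab `a = x` T_def by auto
        qed
      next
        case False
        hence aS: "a \<in> S" using ab T_def by auto
        show ?thesis
        proof (cases "b = x")
          case True thus ?thesis using key[OF aS] by (simp add: add.commute)
        next
          case False thus ?thesis using aS ab clS T_def by auto
        qed
      qed
    qed
    have nsT: "numerical_semigroup T"
      unfolding numerical_semigroup_def
    proof (intro conjI)
      show "0 \<in> T" using z T_def by simp
      show "\<forall>a\<in>T. \<forall>b\<in>T. a + b \<in> T" using clT .
      show "finite (UNIV - T)"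
        using assms(2) unfolding numerical_semigroup_def T_def
        by (rule conjE, elim conjE) (erule finite_subset[rotated], auto)
    qed
    have fT: "frobenius T = int n"
      by (rule frob_intro) (use fc xn T_def in auto)
    have msgT: "x \<in> msg T"
      unfolding msg_def
    proof (intro CollectI conjI)
      show "x \<in> T" using T_def by simp
      show "x \<noteq> 0" using x0 by simp
      show "\<not> (\<exists>a\<in>T. \<exists>b\<in>T. a \<noteq> 0 \<and> b \<noteq> 0 \<and> x = a + b)"
      proof
      assume "\<exists>a\<in>T. \<exists>b\<in>T. a \<noteq> 0 \<and> b \<noteq> 0 \<and> x = a + b"
      then obtain a b where ab: "a \<in> T" "b \<in> T" "a \<noteq> 0" "b \<noteq> 0" "x = a + b" by blast
      hence "a \<in> S" "b \<in> S" using T_def by auto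
      hence "a + b \<in> S" using clS by blast
      thus False using ab xS by simp
      qed
    qed
    have ST: "S = T - {x}" using T_def xS by auto
    have "lnum S = lnum T + 2" by (rule L_remove[OF nsT fT assms(2) Sf ST]) (use T_def x0 xn x2 in auto)
    hence "int (lnum T) = int l - 2" using A by simp
    thus "\<exists>T x. numerical_semigroup T \<and> frobenius T = F \<and> x \<in> msg T \<and>
       int (lnum T) = int l - 2 \<and> F < 2 * int x \<and> int x < F \<and> S = T - {x}"
      using nsT fT msgT ST x2 xn Fn by (intro exI[of _ T] exI[of _ x]) auto
  next
    assume "\<exists>T x. numerical_semigroup T \<and> frobenius T = F \<and> x \<in> msg T \<and>
       int (lnum T) = int l - 2 \<and> F < 2 * int x \<and> int x < F \<and> S = T - {x}"
    then obtain T x where H: "numerical_semigroup T" "frobenius T = F" "x \<in> msg T"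
       "int (lnum T) = int l - 2" "F < 2 * int x" "int x < F" "S = T - {x}" by blast
    have xT: "x \<in> T" "0 < x" using H(3) unfolding msg_def by auto
    have "lnum S = lnum T + 2"
      by (rule L_remove[OF H(1) _ assms(2) Sf H(7) xT]) (use H Fn in auto)
    thus "lnum S = l \<and> l \<ge> 2" using H(4) by linarith
  qed
qed

end
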